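(* Let $x\cdot y$ be a PA-structure on $(\mathfrak{g},\mathfrak{n})$, where $\mathfrak{g}$ and $\mathfrak{n}$ are $2$-step nilpotent. Then $x\circ y=\frac12(x\cdot y+y\cdot x)$ defines a CPA-structure on $\mathfrak{n}$ if and only if, for all $x,y\in V$, $$[\mathrm{ad}(x),\mathrm{Ad}(y)]=\mathrm{Ad}([x,y])$$ and $$L(\{x,y\})-L([x,y])=\tfrac12\bigl(\mathrm{ad}(\{x,y\})+[\mathrm{ad}(y),L(x)]+[L(y),\mathrm{ad}(x)]\bigr).$$
   Context: Let $K$ be a field of characteristic zero and $V$ a finite-dimensional vector space over $K$. Let $\mathfrak{g}=(V,[\,,])$ and $\mathfrak{n}=(V,\{\,,\})$ be two Lie algebra structures on $V$. A post-Lie algebra structure (PA-structure) on the pair $(\mathfrak{g},\mathfrak{n})$ is a $K$-bilinear product $x\cdot y$ on $V$ satisfying, for all $x,y,z\in V$: (i) $x\cdot y-y\cdot x=[x,y]-\{x,y\}$; (ii) $[x,y]\cdot z=x\cdot(y\cdot z)-y\cdot(x\cdot z)$; (iii) $x\cdot\{y,z\}=\{x\cdot y,z\}+\{y,x\cdot z\}$. Write $L(x)(y)=x\cdot y$, $\mathrm{ad}(x)(y)=[x,y]$, $\mathrm{Ad}(x)(y)=\{x,y\}$; brackets of operators are commutators in $\mathrm{End}(V)$. A commutative post-Lie algebra structure (CPA-structure) on the Lie algebra $\mathfrak{n}=(V,\{\,,\})$ is a bilinear product $x\circ y$ on $V$ with $x\circ y=y\circ x$, $\{x,y\}\circ z=x\circ(y\circ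 z)-y\circ(x\circ z)$, and $x\circ\{y,z\}=\{x\circ y,z\}+\{y,x\circ z\}$ for all $x,y,z$. A Lie algebra is called $2$-step nilpotent here if it is nilpotent of class at most $2$. *)

theory Defs
  imports Main "HOL.Vector_Spaces"
begin

definition bilinear_prod :: "('k::field \<Rightarrow> 'v::ab_group_add \<Rightarrow> 'v) \<Rightarrow> ('v \<Rightarrow> 'v \<Rightarrow> 'v) \<Rightarrow> bool" where
  "bilinear_prod scale p \<longleftrightarrow>
     (\<forall>x y z. p (x + y) z = p x z + p y z) \<and>
     (\<forall>x y z. p x (y + z) = p x y + p x z) \<and>
     (\<forall>a x y. p (scale a x) y = scale a (p x y)) \<and>
     (\<forall>a x y. p x (scale a y) = scale a (p x y))"

definition lie_algebra :: "('k::field \<Rightarrow> 'v::ab_group_add \<Rightarrow> 'v) \<Rightarrow> ('v \<Rightarrow> 'v \<Rightarrow> 'v) \<Rightarrow> bool" where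
  "lie_algebra scale br \<longleftrightarrow>
     bilinear_prod scale br \<and>
     (\<forall>x. br x x = 0) \<and>
     (\<forall>x y z. br x (br y z) + br y (br z x) + br z (br x y) = 0)"

definition two_step_nilpotent :: "('v::ab_group_add \<Rightarrow> 'v \<Rightarrow> 'v) \<Rightarrow> bool" where
  "two_step_nilpotent br \<longleftrightarrow> (\<forall>x y z. br (br x y) z = 0)"

definition op_comm :: "('v::ab_group_add \<Rightarrow> 'v) \<Rightarrow> ('v \<Rightarrow> 'v) \<Rightarrow> 'v \<Rightarrow> 'v" where
  "op_comm f g = (\<lambda>v. f (g v) - g (f v))"

text \<open>Post-Lie algebra structure on the pair (g, n): g has bracket bg, n has bracket bn.\<close>
definition PA_structure :: "('k::field \<Rightarrow> 'v::ab_group_add \<Rightarrow> 'v) \<Rightarrow> ('v \<Rightarrow> 'v \<Rightarrow> 'v) \<Rightarrow> ('v \<Rightarrow> 'v \<Rightarrow> 'v) \<Rightarrow> ('v \<Rightarrow> 'v \<Rightarrow> 'v) \<Rightarrow> bool" where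
  "PA_structure scale bg bn p \<longleftrightarrow>
     bilinear_prod scale p \<and>
     (\<forall>x y. p x y - p y x = bg x y - bn x y) \<and>
     (\<forall>x y z. p (bg x y) z = p x (p y z) - p y (p x z)) \<and>
     (\<forall>x y z. p x (bn y z) = bn (p x y) z + bn y (p x z))"

definition CPA_structure :: "('k::field \<Rightarrow> 'v::ab_group_add \<Rightarrow> 'v) \<Rightarrow> ('v \<Rightarrow> 'v \<Rightarrow> 'v) \<Rightarrow> ('v \<Rightarrow> 'v \<Rightarrow> 'v) \<Rightarrow> bool" where
  "CPA_structure scale bn c \<longleftrightarrow>
     bilinear_prod scale c \<and>
     (\<forall>x y. c x y = c y x) \<and>
     (\<forall>x y z. c (bn x y) z = c x (c y z) - c y (c x z)) \<and>
     (\<forall>x y z. c x (bn y z) = bn (c x y) z + bn y (c x z))"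

end

theory Submission imports Defs begin

lemma bil:
  assumes "bilinear_prod scale p" "module scale"
  shows "p (x+y) z = p x z + p y z" "p x (y+z) = p x y + p x z"
    "p (scale a x) y = scale a (p x y)" "p x (scale a y) = scale a (p x y)"
    "p 0 y = 0" "p x 0 = 0" "p (-x) y = - p x y" "p x (-y) = - p x y"
    "p (x - y) z = p x z - p y z" "p x (y - z) = p x y - p x z"
proof -
  have l: "\<And>x y z. p (x+y) z = p x z + p y z" and r: "\<And>x y z. p x (y+z) = p x y + p x z"
    using assms(1) unfolding bilinear_prod_def by auto
  interpret a1: additive "\<lambda>x. p x y" for y by standard (rule l)
  interpret a2: additive "\<lambda>y. p x y" for x by standard (rule r)
  show "p (x+y) z = p x z + p y z" "p x (y+z) = p x y + p x z" by (rule l, rule r)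
  show "p (scale a x) y = scale a (p x y)" "p x (scale a y) = scale a (p x y)"
    using assms(1) unfolding bilinear_prod_def by auto
  show "p 0 y = 0" "p x 0 = 0" "p (-x) y = - p x y" "p x (-y) = - p x y"
    "p (x - y) z = p x z - p y z" "p x (y - z) = p x y - p x z"
    by (simp_all add: a1.zero a2.zero a1.minus a2.minus a1.diff a2.diff)
qed

lemma ident:
  fixes bg bn p :: "'v::ab_group_add \<Rightarrow> 'v \<Rightarrow> 'v"
  assumes pl: "\<And>x y z. p (x+y) z = p x z + p y z" "\<And>x y z. p x (y+z) = p x y + p x z"
     "\<And>x y z. p (x-y) z = p x z - p y z" "\<And>x y z. p x (y-z) = p x y - p x z"
  and gl: "\<And>x y z. bg (x+y) z = bg x z + bg y z" "\<And>x y z. bg x (y+z) = bg x y + bg x z"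
     "\<And>x y z. bg (x-y) z = bg x z - bg y z" "\<And>x y z. bg x (y-z) = bg x y - bg x z"
  and nl: "\<And>x y z. bn (x+y) z = bn x z + bn y z" "\<And>x y z. bn x (y+z) = bn x y + bn x z"
     "\<And>x y z. bn (x-y) z = bn x z - bn y z" "\<And>x y z. bn x (y-z) = bn x y - bn x z"
  and ii: "\<And>x y z. p (bg x y) z = p x (p y z) - p y (p x z)"
  and iii: "\<And>x y z. p x (bn y z) = bn (p x y) z + bn y (p x z)"
  and ng: "\<And>x y z. bg (bg x y) z = 0" "\<And>x y z. bg x (bg y z) = 0"
  and nn: "\<And>x y z. bn (bn x y) z = 0" "\<And>x y z. bn x (bn y z) = 0"
  and c1: "\<And>x y z. bg x (bn y z) = bn (bg x y) z + bn y (bg x z)"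
  and sw: "\<And>x y. p y x = p x y - bg x y + bn x y" and ag: "\<And>x y. bg y x = - bg x y"
  and nm: "\<And>x z. bn (-x) z = - bn x z" "\<And>x z. p (-x) z = - p x z" "\<And>x z. bg (-x) z = - bg x z"
  shows "let cc = (\<lambda>u v. p u v + p u v - bg u v + bn u v);
             T = (p (bn x y) z - p (bg x y) z) + (p (bn x y) z - p (bg x y) z)
                 - (bg (bn x y) z + (bg y (p x z) - p x (bg y z)) + (p y (bg x z) - bg x (p y z)))
         in cc (bn x y) z + cc (bn x y) z - (cc x (cc y z) - cc y (cc x z)) = T + T"
  by (simp add: Let_def pl gl nl ii iii ng nn c1 algebra_simps sw[of x y] ag[of x y] nm)

lemma ident2:
  fixes bg bn p :: "'v::ab_group_add \<Rightarrow> 'v \<Rightarrow> 'v"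
  assumes pl: "\<And>x y z. p x (y+z) = p x y + p x z" "\<And>x y z. p x (y-z) = p x y - p x z"
  and gl: "\<And>x y z. bg x (y+z) = bg x y + bg x z" "\<And>x y z. bg x (y-z) = bg x y - bg x z"
  and nl: "\<And>x y z. bn (x+y) z = bn x z + bn y z" "\<And>x y z. bn x (y+z) = bn x y + bn x z"
     "\<And>x y z. bn (x-y) z = bn x z - bn y z" "\<And>x y z. bn x (y-z) = bn x y - bn x z"
  and iii: "\<And>x y z. p x (bn y z) = bn (p x y) z + bn y (p x z)"
  and nn: "\<And>x y z. bn (bn x y) z = 0" "\<And>x y z. bn x (bn y z) = 0"
  shows "let cc = (\<lambda>u v. p u v + p u v - bg u v + bn u v)
         in cc x (bn y z) - (bn (cc x y) z + bn y (cc x z)) = - (bg x (bn y z) - bn y (bg x z) - bn (bg x y) z)"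
  by (simp add: Let_def pl gl nl iii nn algebra_simps)

theorem proposition4p6:
  fixes scale :: "'k::field_char_0 \<Rightarrow> 'v::ab_group_add \<Rightarrow> 'v"
    and Basis :: "'v set"
    and bg bn p :: "'v \<Rightarrow> 'v \<Rightarrow> 'v"
  assumes "finite_dimensional_vector_space scale Basis"
    and "lie_algebra scale bg" and "lie_algebra scale bn"
    and "two_step_nilpotent bg" and "two_step_nilpotent bn"
    and "PA_structure scale bg bn p"
  shows "CPA_structure scale bn (\<lambda>x y. scale (1/2) (p x y + p y x)) \<longleftrightarrow>
    ((\<forall>x y. op_comm (bg x) (bn y) = bn (bg x y)) \<and>
     (\<forall>x y. (\<lambda>z. p (bn x y) z - p (bg x y) z) =
            (\<lambda>z. scale (1/2) (bg (bn x y) z + op_comm (bg y) (p x) z + op_comm (p y) (bg x) z))))"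
proof -
  have md: "module scale" using assms(1) module_iff_vector_space
    unfolding finite_dimensional_vector_space_def by blast
  interpret module scale by (rule md)
  have bp: "bilinear_prod scale p" and bg: "bilinear_prod scale bg" and bn: "bilinear_prod scale bn"
    using assms(2,3,6) unfolding lie_algebra_def PA_structure_def by auto
  note P = bil[OF bp md] and G = bil[OF bg md] and N = bil[OF bn md]
  have half: "scale (1/2) (a + a) = a" for a
  proof -
    have "scale (1/2) (a + a) = scale (1/2) a + scale (1/2) a" by (rule scale_right_distrib)
    also have "\<dots> = scale (1/2 + 1/2) a" by (rule scale_left_distrib[symmetric])
    also have "\<dots> = a" by simp
    finally show ?thesis .
  qed
  have hinj: "(a = scale (1/2) b) \<longleftrightarrow> (a + a = b)" for a b
    by (metis half scale_right_distrib)
  have heq: "scale (1/2) a = scale (1/2) b \<longleftrightarrow> a = b" for a b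
  proof -
    have h2: "scale (1/2) a + scale (1/2) a = a" using half[of a] by (simp only: scale_right_distrib)
    show ?thesis using hinj[of "scale (1/2) a" b] h2 by simp
  qed
  have i: "\<And>x y. p x y - p y x = bg x y - bn x y"
   and ii: "\<And>x y z. p (bg x y) z = p x (p y z) - p y (p x z)"
   and iii: "\<And>x y z. p x (bn y z) = bn (p x y) z + bn y (p x z)"
    using assms(6) unfolding PA_structure_def by auto
  have sw: "p y x = p x y - bg x y + bn x y" for x y
  proof -
    have "p y x = p x y - (p x y - p y x)" by simp
    also have "\<dots> = p x y - (bg x y - bn x y)" by (simp only: i)
    also have "\<dots> = p x y - bg x y + bn x y" by (simp add: algebra_simps)
    finally show ?thesis .
  qed
  have ag: "bg y x = - bg x y" for x y
  proof -
    have "bg (x+y) (x+y) = 0" "bg x x = 0" "bg y y = 0" using assms(2) unfolding lie_algebra_def by auto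
    then show ?thesis by (simp add: G algebra_simps eq_neg_iff_add_eq_0)
  qed
  have an: "bn y x = - bn x y" for x y
  proof -
    have "bn (x+y) (x+y) = 0" "bn x x = 0" "bn y y = 0" using assms(3) unfolding lie_algebra_def by auto
    then show ?thesis by (simp add: N algebra_simps eq_neg_iff_add_eq_0)
  qed
  have ng1: "bg (bg x y) z = 0" and nn1: "bn (bn x y) z = 0" for x y z
    using assms(4,5) unfolding two_step_nilpotent_def by auto
  have ng2: "bg x (bg y z) = 0" and nn2: "bn x (bn y z) = 0" for x y z
    using ag[of x "bg y z"] an[of x "bn y z"] ng1 nn1 by simp_all
  define C where "C = (\<lambda>x y. scale (1/2) (p x y + p y x))"
  define CC where "CC = (\<lambda>u v. p u v + p u v - bg u v + bn u v)"
  have Ceq: "C x y = scale (1/2) (CC x y)" for x y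
    unfolding C_def CC_def sw[of x y] by (rule arg_cong[where f="scale (1/2)"]) (simp add: algebra_simps ag[of x y] an[of x y])
  have CCh: "CC x (scale a w) = scale a (CC x w)" for x a w
    unfolding CC_def by (simp add: P G N algebra_simps)
  have CCd: "CC x (a - b) = CC x a - CC x b" for x a b
    unfolding CC_def by (simp add: P G N algebra_simps)
  have cond1_iff: "(\<forall>x y. op_comm (bg x) (bn y) = bn (bg x y)) \<longleftrightarrow>
      (\<forall>x y z. bg x (bn y z) - bn y (bg x z) - bn (bg x y) z = 0)"
    unfolding op_comm_def fun_eq_iff by simp
  have deriv_iff: "(\<forall>x y z. C x (bn y z) = bn (C x y) z + bn y (C x z)) \<longleftrightarrow>
      (\<forall>x y. op_comm (bg x) (bn y) = bn (bg x y))"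
  proof -
    have "C x (bn y z) = bn (C x y) z + bn y (C x z) \<longleftrightarrow>
          bg x (bn y z) - bn y (bg x z) - bn (bg x y) z = 0" for x y z
    proof -
      have e: "CC x (bn y z) - (bn (CC x y) z + bn y (CC x z)) = - (bg x (bn y z) - bn y (bg x z) - bn (bg x y) z)"
        using ident2[of p bg bn x y z] unfolding CC_def Let_def
        by (simp add: P G N iii nn1 nn2)
      have "C x (bn y z) = bn (C x y) z + bn y (C x z) \<longleftrightarrow>
            scale (1/2) (CC x (bn y z)) = scale (1/2) (bn (CC x y) z + bn y (CC x z))"
        by (simp add: Ceq N scale_right_distrib)
      also have "\<dots> \<longleftrightarrow> CC x (bn y z) - (bn (CC x y) z + bn y (CC x z)) = 0"
        by (simp only: heq right_minus_eq)
      also have "\<dots> \<longleftrightarrow> bg x (bn y z) - bn y (bg x z) - bn (bg x y) z = 0"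
        by (simp only: e neg_equal_0_iff_equal)
      finally show ?thesis .
    qed
    then show ?thesis using cond1_iff by simp
  qed
  have assoc_iff: "(\<forall>x y z. C (bn x y) z = C x (C y z) - C y (C x z)) \<longleftrightarrow>
     (\<forall>x y. (\<lambda>z. p (bn x y) z - p (bg x y) z) =
            (\<lambda>z. scale (1/2) (bg (bn x y) z + op_comm (bg y) (p x) z + op_comm (p y) (bg x) z)))"
    if c1: "\<forall>x y. op_comm (bg x) (bn y) = bn (bg x y)"
  proof -
    have c1': "bg x (bn y z) = bn (bg x y) z + bn y (bg x z)" for x y z
    proof -
      have "bg x (bn y z) - bn y (bg x z) - bn (bg x y) z = 0" using c1 cond1_iff by blast
      then show ?thesis by (simp add: algebra_simps)
    qed
    have "C (bn x y) z = C x (C y z) - C y (C x z) \<longleftrightarrow>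
          p (bn x y) z - p (bg x y) z =
            scale (1/2) (bg (bn x y) z + op_comm (bg y) (p x) z + op_comm (p y) (bg x) z)" for x y z
    proof -
      define T where "T = (p (bn x y) z - p (bg x y) z) + (p (bn x y) z - p (bg x y) z)
                 - (bg (bn x y) z + (bg y (p x z) - p x (bg y z)) + (p y (bg x z) - bg x (p y z)))"
      have e: "CC (bn x y) z + CC (bn x y) z - (CC x (CC y z) - CC y (CC x z)) = T + T"
        using ident[of p bg bn x y z, OF P(1,2,9,10) G(1,2,9,10) N(1,2,9,10) ii iii ng1 ng2 nn1 nn2 c1' sw ag N(7) P(7) G(7)]
        unfolding CC_def T_def Let_def by simp
      have "C (bn x y) z = C x (C y z) - C y (C x z) \<longleftrightarrow>
            CC (bn x y) z = scale (1/2) (CC x (CC y z) - CC y (CC x z))"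
      proof -
        have "C x (C y z) - C y (C x z) = scale (1/2) (scale (1/2) (CC x (CC y z) - CC y (CC x z)))"
          by (simp only: Ceq CCh CCd scale_right_diff_distrib)
        then show ?thesis by (simp only: Ceq heq)
      qed
      also have "\<dots> \<longleftrightarrow> CC (bn x y) z + CC (bn x y) z = CC x (CC y z) - CC y (CC x z)"
        by (rule hinj)
      also have "\<dots> \<longleftrightarrow> CC (bn x y) z + CC (bn x y) z - (CC x (CC y z) - CC y (CC x z)) = 0"
        by (rule right_minus_eq[symmetric])
      also have "\<dots> \<longleftrightarrow> T + T = 0"
        by (simp only: e)
      also have "\<dots> \<longleftrightarrow> T = scale (1/2) 0"
        by (rule hinj[symmetric])
      also have "\<dots> \<longleftrightarrow> T = 0"
        by simp
      also have "\<dots> \<longleftrightarrow> p (bn x y) z - p (bg x y) z =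
            scale (1/2) (bg (bn x y) z + op_comm (bg y) (p x) z + op_comm (p y) (bg x) z)"
        unfolding hinj T_def op_comm_def by (simp only: right_minus_eq)
      finally show ?thesis .
    qed
    then show ?thesis by (simp add: fun_eq_iff)
  qed
  have bilC: "bilinear_prod scale C"
    unfolding bilinear_prod_def C_def
    by (simp add: P algebra_simps scale_left_commute)
  have commC: "\<forall>x y. C x y = C y x" unfolding C_def by (simp add: add.commute)
  show ?thesis
    unfolding CPA_structure_def C_def[symmetric]
    using bilC commC deriv_iff assoc_iff by blast
qed

end
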